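(* If a finite algebra $\mathbf{A}$ is a spread of a family of subsets on which the induced algebras have Maltsev polynomials, then $d_{\mathbf{A}}(n)\in O(n)$.
   Context: $d_{\mathbf{A}}(n)$ is the least size of a generating set of $\mathbf{A}^n$. A subset $S\subseteq A$ is a spread of a family $\mathcal U$ of subsets of $A$ if $S=p(U_1,\dots,U_k)$ for a polynomial $p$ of $\mathbf{A}$ and (not necessarily distinct) $U_i\in\mathcal U$; $\mathbf{A}$ is a spread of $\mathcal U$ if $A$ is. For $U\subseteq A$ the induced algebra $\mathbf{A}|_U$ has universe $U$ and as operations the restrictions to $U$ of the polynomials of $\mathbf{A}$ under which $U$ is closed. A Maltsev polynomial is a polynomial $m(x,y,z)$ with $m(x,y,y)=x=m(y,y,x)$. *)

theory Defs
  imports Main "HOL-Library.Landau_Symbols"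
begin

text \<open>An algebra is given by its universe A :: 'a set and a set F of fundamental
operations, each a pair (arity, function on lists); an operation of arity m is
only ever applied to lists of length m.\<close>

definition tuples :: "'a set \<Rightarrow> nat \<Rightarrow> 'a list set" where
  "tuples A n = {xs. length xs = n \<and> set xs \<subseteq> A}"

definition is_algebra :: "'a set \<Rightarrow> (nat \<times> ('a list \<Rightarrow> 'a)) set \<Rightarrow> bool" where
  "is_algebra A F \<longleftrightarrow> A \<noteq> {} \<and> (\<forall>(m, f) \<in> F. \<forall>xs \<in> tuples A m. f xs \<in> A)"

inductive_set clo :: "(nat \<times> ('a list \<Rightarrow> 'a)) set \<Rightarrow> nat \<Rightarrow> ('a list \<Rightarrow> 'a) set"
  for F :: "(nat \<times> ('a list \<Rightarrow> 'a)) set" and k :: nat where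
  proj: "i < k \<Longrightarrow> (\<lambda>xs. xs ! i) \<in> clo F k"
| app: "(m, f) \<in> F \<Longrightarrow> length gs = m \<Longrightarrow> (\<forall>g \<in> set gs. g \<in> clo F k)
          \<Longrightarrow> (\<lambda>xs. f (map (\<lambda>g. g xs) gs)) \<in> clo F k"

inductive_set polys :: "'a set \<Rightarrow> (nat \<times> ('a list \<Rightarrow> 'a)) set \<Rightarrow> nat \<Rightarrow> ('a list \<Rightarrow> 'a) set"
  for A :: "'a set" and F :: "(nat \<times> ('a list \<Rightarrow> 'a)) set" and k :: nat where
  proj: "i < k \<Longrightarrow> (\<lambda>xs. xs ! i) \<in> polys A F k"
| const: "c \<in> A \<Longrightarrow> (\<lambda>xs. c) \<in> polys A F k"
| app: "(m, f) \<in> F \<Longrightarrow> length gs = m \<Longrightarrow> (\<forall>g \<in> set gs. g \<in> polys A F k)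
          \<Longrightarrow> (\<lambda>xs. f (map (\<lambda>g. g xs) gs)) \<in> polys A F k"

text \<open>Subuniverse of A^n generated by S (operations act coordinatewise).\<close>
definition sg :: "(nat \<times> ('a list \<Rightarrow> 'a)) set \<Rightarrow> nat \<Rightarrow> 'a list set \<Rightarrow> 'a list set" where
  "sg F n S = {map (\<lambda>i. t (map (\<lambda>s. s ! i) ss)) [0..<n] | t ss.
                 t \<in> clo F (length ss) \<and> set ss \<subseteq> S}"

definition generates :: "'a set \<Rightarrow> (nat \<times> ('a list \<Rightarrow> 'a)) set \<Rightarrow> nat \<Rightarrow> 'a list set \<Rightarrow> bool" where
  "generates A F n S \<longleftrightarrow> S \<subseteq> tuples A n \<and> sg F n S = tuples A n"

definition d_gen :: "'a set \<Rightarrow> (nat \<times> ('a list \<Rightarrow> 'a)) set \<Rightarrow> nat \<Rightarrow> nat" where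
  "d_gen A F n = (LEAST k. \<exists>S. finite S \<and> card S = k \<and> generates A F n S)"

definition poly_image :: "('a list \<Rightarrow> 'a) \<Rightarrow> 'a set list \<Rightarrow> 'a set" where
  "poly_image p Us = {p xs | xs. length xs = length Us \<and> (\<forall>i < length Us. xs ! i \<in> Us ! i)}"

definition is_spread :: "'a set \<Rightarrow> (nat \<times> ('a list \<Rightarrow> 'a)) set \<Rightarrow> 'a set set \<Rightarrow> 'a set \<Rightarrow> bool" where
  "is_spread A F \<U> S \<longleftrightarrow>
     (\<exists>p Us. p \<in> polys A F (length Us) \<and> set Us \<subseteq> \<U> \<and> S = poly_image p Us)"

text \<open>Operations of the induced algebra A|_U: (restrictions to U of) the polynomials
of A under which U is closed. Only their values on U are ever used.\<close>
definition induced_ops :: "'a set \<Rightarrow> (nat \<times> ('a list \<Rightarrow> 'a)) set \<Rightarrow> 'a set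
      \<Rightarrow> (nat \<times> ('a list \<Rightarrow> 'a)) set" where
  "induced_ops A F U = {(k, p). p \<in> polys A F k \<and> (\<forall>xs \<in> tuples U k. p xs \<in> U)}"

definition has_maltsev :: "'a set \<Rightarrow> (nat \<times> ('a list \<Rightarrow> 'a)) set \<Rightarrow> bool" where
  "has_maltsev B G \<longleftrightarrow> (\<exists>m \<in> polys B G 3. \<forall>x \<in> B. \<forall>y \<in> B.
       m [x, y, y] = x \<and> m [y, y, x] = x)"

end

theory Submission
  imports Defs
begin

inductive_set gen :: "(nat \<times> ('a list \<Rightarrow> 'a)) set \<Rightarrow> nat \<Rightarrow> 'a list set \<Rightarrow> 'a list set"
  for F :: "(nat \<times> ('a list \<Rightarrow> 'a)) set" and n :: nat and S :: "'a list set" where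
  base: "s \<in> S \<Longrightarrow> s \<in> gen F n S"
| app: "(m, f) \<in> F \<Longrightarrow> length ys = m \<Longrightarrow> (\<forall>y \<in> set ys. y \<in> gen F n S)
          \<Longrightarrow> map (\<lambda>i. f (map (\<lambda>y. y ! i) ys)) [0..<n] \<in> gen F n S"

lemma gen_len:
  assumes "\<forall>s\<in>S. length s = n" "y \<in> gen F n S"
  shows "length y = n"
  using assms(2) by induction (use assms(1) in auto)

lemma clo_in_A:
  assumes alg: "is_algebra A F"
  shows "t \<in> clo F k \<Longrightarrow> xs \<in> tuples A k \<Longrightarrow> t xs \<in> A"
proof (induction t rule: clo.induct)
  case (proj i)
  then show ?case by (auto simp: tuples_def)
next
  case (app m f gs)
  have "map (\<lambda>g. g xs) gs \<in> tuples A m" using app by (auto simp: tuples_def)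
  then show ?case using alg app(1) unfolding is_algebra_def by auto
qed

lemma sg_sub:
  assumes alg: "is_algebra A F" and S: "S \<subseteq> tuples A n"
  shows "sg F n S \<subseteq> tuples A n"
proof
  fix y assume "y \<in> sg F n S"
  then obtain t ss where y: "y = map (\<lambda>i. t (map (\<lambda>s. s ! i) ss)) [0..<n]"
    and t: "t \<in> clo F (length ss)" and ss: "set ss \<subseteq> S"
    unfolding sg_def by blast
  have "\<And>i. i < n \<Longrightarrow> map (\<lambda>s. s ! i) ss \<in> tuples A (length ss)"
  proof -
    fix i assume i: "i < n"
    have "\<forall>s\<in>set ss. s ! i \<in> A"
    proof
      fix s assume "s \<in> set ss"
      then have "s \<in> tuples A n" using ss S by auto
      then show "s ! i \<in> A" using i by (auto simp: tuples_def)
    qed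
    then show "map (\<lambda>s. s ! i) ss \<in> tuples A (length ss)" by (auto simp: tuples_def)
  qed
  then show "y \<in> tuples A n" using clo_in_A[OF alg t] y by (auto simp: tuples_def)
qed

lemma choose_list:
  assumes "\<forall>y \<in> set ys. \<exists>t. P y t"
  shows "\<exists>ts. length ts = length ys \<and> (\<forall>j < length ys. P (ys ! j) (ts ! j))"
proof (intro exI conjI allI impI)
  show "length (map (\<lambda>y. SOME t. P y t) ys) = length ys" by simp
  fix j assume j: "j < length ys"
  then have "\<exists>t. P (ys ! j) t" using assms by auto
  then show "P (ys ! j) (map (\<lambda>y. SOME t. P y t) ys ! j)" using j by (auto intro: someI_ex)
qed

lemma gen_sg:
  assumes fin: "finite S" and S: "\<forall>s\<in>S. length s = n"
  shows "gen F n S \<subseteq> sg F n S"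
proof -
  obtain ss0 where ss0: "set ss0 = S" using finite_list[OF fin] by blast
  have "y \<in> gen F n S \<Longrightarrow> \<exists>t \<in> clo F (length ss0). y = map (\<lambda>i. t (map (\<lambda>s. s ! i) ss0)) [0..<n]" for y
  proof (induction rule: gen.induct)
    case (base s)
    then obtain j where j: "j < length ss0" "s = ss0 ! j" using ss0 by (auto simp: in_set_conv_nth)
    have ls: "length s = n" using base S by auto
    have "map (\<lambda>i. (map (\<lambda>s. s ! i) ss0) ! j) [0..<n] = s"
      using j ls by (intro nth_equalityI) auto
    moreover have "(\<lambda>xs. xs ! j) \<in> clo F (length ss0)" using j(1) by (rule clo.proj)
    ultimately show ?case by force
  next
    case (app m f ys)
    then obtain ts where ts: "length ts = length ys"
      "\<forall>j < length ys. ts ! j \<in> clo F (length ss0) \<and> ys ! j = map (\<lambda>i. (ts ! j) (map (\<lambda>s. s ! i) ss0)) [0..<n]"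
      using choose_list[of ys "\<lambda>y t. t \<in> clo F (length ss0) \<and> y = map (\<lambda>i. t (map (\<lambda>s. s ! i) ss0)) [0..<n]"]
      by blast
    have tc: "(\<lambda>xs. f (map (\<lambda>g. g xs) ts)) \<in> clo F (length ss0)"
      using app(1,2) ts by (intro clo.app[of m f]) (auto simp: in_set_conv_nth)
    have eq: "map (\<lambda>i. f (map (\<lambda>y. y ! i) ys)) [0..<n] = map (\<lambda>i. (\<lambda>xs. f (map (\<lambda>g. g xs) ts)) (map (\<lambda>s. s ! i) ss0)) [0..<n]"
    proof (rule map_cong[OF refl])
      fix i assume "i \<in> set [0..<n]"
      then have i: "i < n" by simp
      have "map (\<lambda>y. y ! i) ys = map (\<lambda>g. g (map (\<lambda>s. s ! i) ss0)) ts"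
        using ts i by (intro nth_equalityI) auto
      then show "f (map (\<lambda>y. y ! i) ys) = (\<lambda>xs. f (map (\<lambda>g. g xs) ts)) (map (\<lambda>s. s ! i) ss0)" by simp
    qed
    show ?case by (rule bexI[OF _ tc]) (simp only: eq)
  qed
  then show ?thesis unfolding sg_def using ss0 by blast
qed

lemma poly_gen:
  assumes S: "\<forall>s\<in>S. length s = n" and D: "\<forall>c\<in>A. replicate n c \<in> gen F n S"
  shows "p \<in> polys A F k \<Longrightarrow> length ys = k \<Longrightarrow> set ys \<subseteq> gen F n S
    \<Longrightarrow> map (\<lambda>i. p (map (\<lambda>y. y ! i) ys)) [0..<n] \<in> gen F n S"
proof (induction p rule: polys.induct)
  case (proj i)
  then have mem: "ys ! i \<in> gen F n S" by auto
  then have "length (ys ! i) = n" using gen_len[OF S] by auto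
  then have "map (\<lambda>x. (map (\<lambda>y. y ! x) ys) ! i) [0..<n] = ys ! i"
    using proj by (intro nth_equalityI) auto
  then show ?case using mem by simp
next
  case (const c)
  then show ?case using D by (simp add: map_replicate_const)
next
  case (app m f gs)
  let ?zs = "map (\<lambda>g. map (\<lambda>i. g (map (\<lambda>y. y ! i) ys)) [0..<n]) gs"
  have "map (\<lambda>i. f (map (\<lambda>z. z ! i) ?zs)) [0..<n] \<in> gen F n S"
    using app by (intro gen.app[of m f]) auto
  moreover have "map (\<lambda>i. f (map (\<lambda>z. z ! i) ?zs)) [0..<n] =
     map (\<lambda>i. f (map (\<lambda>g. g (map (\<lambda>y. y ! i) ys)) gs)) [0..<n]"
  proof (rule map_cong[OF refl])
    fix i assume "i \<in> set [0..<n]"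
    then have "i < n" by simp
    then show "f (map (\<lambda>z. z ! i) ?zs) = f (map (\<lambda>g. g (map (\<lambda>y. y ! i) ys)) gs)"
      by (simp add: comp_def)
  qed
  ultimately show ?case by metis
qed

lemma ipoly_gen:
  assumes S: "\<forall>s\<in>S. length s = n" and D: "\<forall>c\<in>A. replicate n c \<in> gen F n S"
    and U: "U \<subseteq> A"
  shows "q \<in> polys U (induced_ops A F U) k \<Longrightarrow> length ys = k \<Longrightarrow> set ys \<subseteq> gen F n S
    \<Longrightarrow> map (\<lambda>i. q (map (\<lambda>y. y ! i) ys)) [0..<n] \<in> gen F n S"
proof (induction q rule: polys.induct)
  case (proj i)
  then have mem: "ys ! i \<in> gen F n S" by auto
  then have "length (ys ! i) = n" using gen_len[OF S] by auto
  then have "map (\<lambda>x. (map (\<lambda>y. y ! x) ys) ! i) [0..<n] = ys ! i"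
    using proj by (intro nth_equalityI) auto
  then show ?case using mem by simp
next
  case (const c)
  then show ?case using D U by (auto simp add: map_replicate_const)
next
  case (app m f gs)
  let ?zs = "map (\<lambda>g. map (\<lambda>i. g (map (\<lambda>y. y ! i) ys)) [0..<n]) gs"
  have fp: "f \<in> polys A F m" using app(1) unfolding induced_ops_def by auto
  have "map (\<lambda>i. f (map (\<lambda>z. z ! i) ?zs)) [0..<n] \<in> gen F n S"
    using app by (intro poly_gen[OF S D fp]) auto
  moreover have "map (\<lambda>i. f (map (\<lambda>z. z ! i) ?zs)) [0..<n] =
     map (\<lambda>i. f (map (\<lambda>g. g (map (\<lambda>y. y ! i) ys)) gs)) [0..<n]"
  proof (rule map_cong[OF refl])
    fix i assume "i \<in> set [0..<n]"
    then have "i < n" by simp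
    then show "f (map (\<lambda>z. z ! i) ?zs) = f (map (\<lambda>g. g (map (\<lambda>y. y ! i) ys)) gs)"
      by (simp add: comp_def)
  qed
  ultimately show ?case by metis
qed

lemma maltsev_gen:
  assumes S: "\<forall>s\<in>S. length s = n" and D: "\<forall>c\<in>A. replicate n c \<in> gen F n S"
    and U: "U \<subseteq> A" and M: "has_maltsev U (induced_ops A F U)"
    and E: "\<forall>c\<in>A. \<forall>a\<in>A. \<forall>j<n. (replicate n c)[j := a] \<in> gen F n S"
    and x: "x \<in> tuples U n" and n: "n > 0"
  shows "x \<in> gen F n S"
proof -
  obtain m where m: "m \<in> polys U (induced_ops A F U) 3"
    and mid: "\<forall>x\<in>U. \<forall>y\<in>U. m [x, y, y] = x \<and> m [y, y, x] = x"
    using M unfolding has_maltsev_def by blast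
  have lx: "length x = n" and xU: "set x \<subseteq> U" using x by (auto simp: tuples_def)
  define c where "c = x ! 0"
  have cU: "c \<in> U" using n lx xU c_def by auto
  have xiU: "\<And>i. i < n \<Longrightarrow> x ! i \<in> U" using lx xU by auto
  define u where "u k = map (\<lambda>i. if i < k then x ! i else c) [0..<n]" for k
  have "k \<le> n \<Longrightarrow> u k \<in> gen F n S" for k
  proof (induction k)
    case 0
    then show ?case using D cU U by (auto simp: u_def map_replicate_const)
  next
    case (Suc k)
    let ?ys = "[u k, replicate n c, (replicate n c)[k := x ! k]]"
    have kn: "k < n" using Suc(2) by simp
    have "set ?ys \<subseteq> gen F n S" using Suc D E[rule_format, of c "x ! k" k] cU U xiU[OF kn] kn by auto
    then have "map (\<lambda>i. m (map (\<lambda>y. y ! i) ?ys)) [0..<n] \<in> gen F n S"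
      by (intro ipoly_gen[OF S D U m]) auto
    moreover have "map (\<lambda>i. m (map (\<lambda>y. y ! i) ?ys)) [0..<n] = u (Suc k)"
    proof (rule nth_equalityI)
      show "length (map (\<lambda>i. m (map (\<lambda>y. y ! i) ?ys)) [0..<n]) = length (u (Suc k))"
        by (simp add: u_def)
      fix i assume "i < length (map (\<lambda>i. m (map (\<lambda>y. y ! i) ?ys)) [0..<n])"
      then have i: "i < n" by simp
      have "i < k \<or> i = k \<or> i > k" by auto
      then show "map (\<lambda>i. m (map (\<lambda>y. y ! i) ?ys)) [0..<n] ! i = u (Suc k) ! i"
        using i Suc(2) mid cU xiU[of i] by (auto simp: u_def)
    qed
    ultimately show ?case by simp
  qed
  then have "u n \<in> gen F n S" by simp
  moreover have "u n = x" unfolding u_def using lx by (intro nth_equalityI) auto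
  ultimately show ?thesis by simp
qed

theorem corollary5p3:
  fixes A :: "'a set" and F :: "(nat \<times> ('a list \<Rightarrow> 'a)) set" and \<U> :: "'a set set"
  assumes "is_algebra A F" and "finite A"
    and "\<forall>U \<in> \<U>. U \<subseteq> A"
    and "\<forall>U \<in> \<U>. has_maltsev U (induced_ops A F U)"
    and "is_spread A F \<U> A"
  shows "(\<lambda>n. real (d_gen A F n)) \<in> O(\<lambda>n. real n)"
proof -
  note alg = assms(1) and finA = assms(2)
  obtain p Us where p: "p \<in> polys A F (length Us)" and Us: "set Us \<subseteq> \<U>"
    and Ap: "A = poly_image p Us"
    using assms(5) unfolding is_spread_def by blast
  define Sn where "Sn n = (\<lambda>(c, a, j). (replicate n c)[j := a]) ` (A \<times> A \<times> {..<n})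
      \<union> (\<lambda>c. replicate n c) ` A" for n :: nat
  have bound: "d_gen A F n \<le> (card A * card A + card A) * n" if n: "n > 0" for n
  proof -
    let ?S = "Sn n"
    have finS: "finite ?S" unfolding Sn_def using finA by auto
    have Stup: "?S \<subseteq> tuples A n"
    proof
      fix s assume "s \<in> ?S"
      then consider (a) c a j where "c \<in> A" "a \<in> A" "j < n" "s = (replicate n c)[j := a]"
        | (b) c where "c \<in> A" "s = replicate n c" unfolding Sn_def by auto
      then show "s \<in> tuples A n"
      proof cases
        case a
        then have "set s \<subseteq> insert a (set (replicate n c))" using a(4) set_update_subset_insert[of "replicate n c" j a] by simp
        moreover have "set (replicate n c) \<subseteq> {c}" by (simp add: set_replicate_conv_if)
        ultimately have "set s \<subseteq> A" using a by blast
        then show ?thesis using a by (simp add: tuples_def)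
      next
        case b
        then show ?thesis by (auto simp: tuples_def)
      qed
    qed
    have Slen: "\<forall>s\<in>?S. length s = n" using Stup by (auto simp: tuples_def)
    have D: "\<forall>c\<in>A. replicate n c \<in> gen F n ?S"
    proof
      fix c assume c: "c \<in> A"
      have "replicate n c \<in> Sn n" unfolding Sn_def by (rule UnI2, rule imageI, rule c)
      then show "replicate n c \<in> gen F n ?S" by (rule gen.base)
    qed
    have E: "\<forall>c\<in>A. \<forall>a\<in>A. \<forall>j<n. (replicate n c)[j := a] \<in> gen F n ?S"
    proof (intro ballI allI impI)
      fix c a j assume "c \<in> A" "a \<in> A" "j < n"
      then have "(c, a, j) \<in> A \<times> A \<times> {..<n}" by simp
      then have "(replicate n c)[j := a] \<in> Sn n" unfolding Sn_def
        by (intro UnI1 rev_image_eqI[of "(c, a, j)"]) auto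
      then show "(replicate n c)[j := a] \<in> gen F n ?S" by (rule gen.base)
    qed
    have "tuples A n \<subseteq> gen F n ?S"
    proof
      fix x assume x: "x \<in> tuples A n"
      then have lx: "length x = n" by (auto simp: tuples_def)
      have "\<forall>i<n. \<exists>xs. length xs = length Us \<and> (\<forall>j < length Us. xs ! j \<in> Us ! j) \<and> p xs = x ! i"
      proof (intro allI impI)
        fix i assume "i < n"
        then have "x ! i \<in> A" using x by (auto simp: tuples_def)
        then have "x ! i \<in> poly_image p Us" using Ap by simp
        then obtain xs where "x ! i = p xs" "length xs = length Us" "\<forall>j < length Us. xs ! j \<in> Us ! j"
          unfolding poly_image_def by blast
        then show "\<exists>xs. length xs = length Us \<and> (\<forall>j < length Us. xs ! j \<in> Us ! j) \<and> p xs = x ! i"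
          by metis
      qed
      then have ex: "\<And>i. i < n \<Longrightarrow> \<exists>xs. length xs = length Us \<and> (\<forall>j < length Us. xs ! j \<in> Us ! j) \<and> p xs = x ! i"
        by blast
      define X where "X i = (SOME xs. length xs = length Us \<and> (\<forall>j < length Us. xs ! j \<in> Us ! j) \<and> p xs = x ! i)" for i
      have X: "\<And>i. i < n \<Longrightarrow> length (X i) = length Us \<and> (\<forall>j < length Us. X i ! j \<in> Us ! j) \<and> p (X i) = x ! i"
        unfolding X_def by (rule someI_ex, rule ex)
      define ys where "ys = map (\<lambda>j. map (\<lambda>i. X i ! j) [0..<n]) [0..<length Us]"
      have "set ys \<subseteq> gen F n ?S"
      proof
        fix y assume "y \<in> set ys"
        then obtain j where j: "j < length Us" and y: "y = map (\<lambda>i. X i ! j) [0..<n]"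
          unfolding ys_def by auto
        have UsU: "Us ! j \<in> \<U>" using j Us by auto
        have "set y \<subseteq> Us ! j"
        proof
          fix z assume "z \<in> set y"
          then obtain i where i: "i < n" and z: "z = X i ! j" using y by auto
          show "z \<in> Us ! j" using X[OF i] j z by blast
        qed
        then have "y \<in> tuples (Us ! j) n" using y by (simp add: tuples_def)
        then show "y \<in> gen F n ?S"
          by (rule maltsev_gen[OF Slen D assms(3)[rule_format, OF UsU] assms(4)[rule_format, OF UsU] E _ n])
      qed
      then have "map (\<lambda>i. p (map (\<lambda>y. y ! i) ys)) [0..<n] \<in> gen F n ?S"
        by (intro poly_gen[OF Slen D p]) (auto simp: ys_def)
      moreover have "map (\<lambda>i. p (map (\<lambda>y. y ! i) ys)) [0..<n] = x"
      proof (rule nth_equalityI)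
        fix i assume "i < length (map (\<lambda>i. p (map (\<lambda>y. y ! i) ys)) [0..<n])"
        then have i: "i < n" by simp
        have lXi: "length (X i) = length Us" using X[OF i] by blast
        have "map (\<lambda>y. y ! i) ys = X i"
        proof (rule nth_equalityI)
          show "length (map (\<lambda>y. y ! i) ys) = length (X i)" using lXi by (simp add: ys_def)
          fix j assume "j < length (map (\<lambda>y. y ! i) ys)"
          then have "j < length Us" by (simp add: ys_def)
          then show "map (\<lambda>y. y ! i) ys ! j = X i ! j" using i by (simp add: ys_def)
        qed
        then show "map (\<lambda>i. p (map (\<lambda>y. y ! i) ys)) [0..<n] ! i = x ! i" using X[OF i] i by simp
      qed (simp add: lx)
      ultimately show "x \<in> gen F n ?S" by simp
    qed
    then have "generates A F n ?S"
      unfolding generates_def using Stup sg_sub[OF alg Stup] gen_sg[OF finS Slen] by blast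
    then have "d_gen A F n \<le> card ?S" unfolding d_gen_def using finS by (intro Least_le) blast
    also have "card ?S \<le> card (A \<times> A \<times> {..<n}) + card A"
      unfolding Sn_def by (rule order.trans[OF card_Un_le add_mono[OF card_image_le card_image_le]])
        (use finA in auto)
    also have "\<dots> = card A * card A * n + card A" by (simp add: card_cartesian_product)
    also have "\<dots> \<le> (card A * card A + card A) * n" using n
      by (simp add: algebra_simps)
    finally show ?thesis .
  qed
  show ?thesis
  proof (rule bigoI[of _ "real (card A * card A + card A)"])
    show "eventually (\<lambda>n. norm (real (d_gen A F n)) \<le> real (card A * card A + card A) * norm (real n)) at_top"
      using eventually_gt_at_top[of 0]
    proof eventually_elim
      case (elim n)
      then have "real (d_gen A F n) \<le> real ((card A * card A + card A) * n)"
        using bound by (simp only: of_nat_le_iff)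
      then show ?case by simp
    qed
  qed
qed

end
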